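(* Let $\lambda >0$ and $t\ge 1$. For any $k\geq 3$, $$\Pr\big(|Z_k(t) - \mathbb{E}[Z_k(t)]| \geq \lambda\big) \leq 2e^{-\frac{\lambda^2}{72t}},$$ where $Z_k(t)$ is the number of vertices of degree $k$ in a Random Apollonian Network after $t$ steps.
   Context: A Random Apollonian Network (RAN) is generated as follows: start (at time $t=0$) with a single triangular face. At each step $t=1,2,\dots$, pick one of the current (bounded) triangular faces uniformly at random, insert a new vertex inside it, and connect it to the three vertices on the boundary of that face, subdividing the face into three new triangular faces. $Z_k(t)$ denotes the number of vertices of degree exactly $k$ after $t$ steps. *)

theory Defs
  imports "HOL-Probability.Probability"
begin

text \<open>A state of a Random Apollonian Network is its set of bounded triangular faces,
each face being the 3-element set of its vertices. Vertices are natural numbers: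
the initial triangle has vertices 0,1,2 and the vertex inserted at step t is t+2.\<close>

type_synonym ran_state = "nat set set"

definition new_faces :: "nat set \<Rightarrow> nat \<Rightarrow> nat set set" where
  "new_faces F v = (\<lambda>e. insert v e) ` {e. e \<subseteq> F \<and> card e = 2}"

definition ran_step :: "nat \<Rightarrow> ran_state \<Rightarrow> ran_state pmf" where
  "ran_step v S = map_pmf (\<lambda>F. (S - {F}) \<union> new_faces F v) (pmf_of_set S)"

fun ran :: "nat \<Rightarrow> ran_state pmf" where
  "ran 0 = return_pmf {{0, 1, 2}}"
| "ran (Suc t) = ran t \<bind> ran_step (t + 3)"

text \<open>Graph structure: every edge lies on some bounded face, so the neighbours of v
are the other vertices of faces containing v.\<close>

definition ran_vertices :: "ran_state \<Rightarrow> nat set" where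
  "ran_vertices S = \<Union>S"

definition ran_degree :: "ran_state \<Rightarrow> nat \<Rightarrow> nat" where
  "ran_degree S v = card {u. u \<noteq> v \<and> (\<exists>F\<in>S. v \<in> F \<and> u \<in> F)}"

definition Z :: "nat \<Rightarrow> ran_state \<Rightarrow> nat" where
  "Z k S = card {v \<in> ran_vertices S. ran_degree S v = k}"

end

theory Submission
  imports Defs "HOL-Probability.Hoeffding"
begin

definition spl :: "ran_state \<Rightarrow> nat set \<Rightarrow> nat \<Rightarrow> ran_state" where
  "spl S F w = (S - {F}) \<union> new_faces F w"

definition good :: "nat \<Rightarrow> ran_state \<Rightarrow> bool" where
  "good i S \<longleftrightarrow> finite S \<and> S \<noteq> {} \<and> (\<forall>F\<in>S. card F = 3 \<and> F \<subseteq> {..<i+3})"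

lemma two_subsets_finite: "finite F \<Longrightarrow> finite {e. e \<subseteq> F \<and> card e = 2}"
  by (rule finite_subset[of _ "Pow F"]) auto

lemma new_faces_props:
  assumes "card F = 3" "w \<notin> F"
  shows "finite (new_faces F w)" "new_faces F w \<noteq> {}"
    "\<And>G. G \<in> new_faces F w \<Longrightarrow> card G = 3 \<and> w \<in> G \<and> G \<subseteq> insert w F"
proof -
  have fF: "finite F" using assms(1) by (metis card.infinite zero_neq_numeral)
  show "finite (new_faces F w)" unfolding new_faces_def using two_subsets_finite[OF fF] by simp
  obtain e where "e \<subseteq> F" "card e = 2"
    using obtain_subset_with_card_n[of 2 F] assms(1) by auto
  then show "new_faces F w \<noteq> {}" unfolding new_faces_def by auto
  fix G assume "G \<in> new_faces F w"
  then obtain e where e: "e \<subseteq> F" "card e = 2" "G = insert w e" unfolding new_faces_def by auto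
  have "w \<notin> e" using e assms by auto
  moreover have "finite e" using e fF finite_subset by auto
  ultimately show "card G = 3 \<and> w \<in> G \<and> G \<subseteq> insert w F" using e by auto
qed

lemma good_spl:
  assumes "good i S" "F \<in> S"
  shows "good (Suc i) (spl S F (i+3))"
proof -
  have c: "card F = 3" and sub: "F \<subseteq> {..<i+3}" using assms unfolding good_def by auto
  have w: "i + 3 \<notin> F" using sub by auto
  note np = new_faces_props[OF c w]
  have A: "\<forall>G\<in>S - {F} \<union> new_faces F (i + 3). card G = 3 \<and> G \<subseteq> {..<Suc i + 3}"
  proof
    fix G assume "G \<in> S - {F} \<union> new_faces F (i + 3)"
    then show "card G = 3 \<and> G \<subseteq> {..<Suc i + 3}"
    proof
      assume "G \<in> S - {F}"
      then have "card G = 3" "G \<subseteq> {..<i+3}" using assms unfolding good_def by auto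
      then show ?thesis by (auto simp: subset_iff)
    next
      assume "G \<in> new_faces F (i+3)" then show ?thesis using np(3)[of G] sub by (force simp: subset_iff)
    qed
  qed
  have "finite (S - {F} \<union> new_faces F (i + 3))" using assms np unfolding good_def by auto
  moreover have "S - {F} \<union> new_faces F (i + 3) \<noteq> {}" using np by auto
  ultimately show ?thesis using A unfolding good_def spl_def by blast
qed

fun ran_from :: "nat \<Rightarrow> ran_state \<Rightarrow> nat \<Rightarrow> ran_state pmf" where
  "ran_from i S 0 = return_pmf S"
| "ran_from i S (Suc n) = ran_step (i+3) S \<bind> (\<lambda>S'. ran_from (Suc i) S' n)"

lemma ran_from_Suc':
  "ran_from i S (Suc n) = pmf_of_set S \<bind> (\<lambda>F. ran_from (Suc i) (spl S F (i+3)) n)"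
  by (simp add: ran_step_def bind_map_pmf spl_def)

lemma ran_from_props:
  assumes "good i S"
  shows "finite (set_pmf (ran_from i S n)) \<and> (\<forall>S'\<in>set_pmf (ran_from i S n). good (i+n) S')"
  using assms
proof (induction n arbitrary: i S)
  case 0 then show ?case by simp
next
  case (Suc n)
  have fS: "finite S" "S \<noteq> {}" using Suc.prems unfolding good_def by auto
  have IH: "\<And>F. F \<in> S \<Longrightarrow> finite (set_pmf (ran_from (Suc i) (spl S F (i+3)) n)) \<and>
     (\<forall>S'\<in>set_pmf (ran_from (Suc i) (spl S F (i+3)) n). good (Suc i + n) S')"
    using Suc.IH good_spl[OF Suc.prems] by blast
  show ?case unfolding ran_from_Suc' using fS IH by (auto simp: set_bind_pmf)
qed

lemma Ex_Suc:
  assumes "good i S"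
  shows "measure_pmf.expectation (ran_from i S (Suc n)) f =
    (\<Sum>F\<in>S. measure_pmf.expectation (ran_from (Suc i) (spl S F (i+3)) n) f) / card S"
proof -
  have fS: "finite S" "S \<noteq> {}" using assms unfolding good_def by auto
  have "\<And>F. F \<in> S \<Longrightarrow> finite (set_pmf (ran_from (Suc i) (spl S F (i+3)) n))"
    using ran_from_props good_spl[OF assms] by blast
  then show ?thesis unfolding ran_from_Suc'
    by (subst pmf_expectation_bind_pmf_of_set) (use fS in \<open>simp_all add: sum_divide_distrib divide_inverse mult.commute sum_distrib_left\<close>)
qed

lemma ran_decomp: "ran (i+n) = ran i \<bind> (\<lambda>S. ran_from i S n)"
proof (induction n arbitrary: i)
  case 0 then show ?case by (simp add: bind_return_pmf')
next
  case (Suc n)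
  have "ran (i + Suc n) = ran (Suc i + n)" by simp
  also have "\<dots> = ran (Suc i) \<bind> (\<lambda>S. ran_from (Suc i) S n)" by (rule Suc.IH)
  also have "\<dots> = ran i \<bind> (\<lambda>S. ran_from i S (Suc n))" by (simp add: bind_assoc_pmf)
  finally show ?case .
qed

lemma ran_eq: "ran t = ran_from 0 {{0,1,2}} t"
  using ran_decomp[of 0 t] by (simp add: bind_return_pmf)

lemma good0: "good 0 {{0,1,2}}" unfolding good_def by auto

definition cinv :: "nat set \<Rightarrow> ran_state \<Rightarrow> ran_state \<Rightarrow> (nat set \<Rightarrow> nat set) \<Rightarrow> (nat \<Rightarrow> nat \<Rightarrow> nat) \<Rightarrow> bool" where
 "cinv B S1 S2 \<phi> \<pi> \<longleftrightarrow> bij_betw \<phi> S1 S2 \<and> (\<forall>F\<in>S1. \<phi> F - B = F - B \<and> card (\<phi> F) = card F)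
   \<and> (\<forall>u x. x \<notin> B \<longrightarrow> \<pi> u x = x)
   \<and> (\<forall>F\<in>S1. \<forall>u\<in>F-B. \<phi> F = \<pi> u ` F)
   \<and> (\<forall>u. u \<notin> B \<longrightarrow> inj_on (\<pi> u) (\<Union>{F\<in>S1. u\<in>F}))
   \<and> (\<forall>F\<in>S1. \<forall>u\<in>F-B. \<forall>u'\<in>F-B. \<forall>x\<in>F. \<pi> u x = \<pi> u' x)"

lemma cinvD:
  assumes "cinv B S1 S2 \<phi> \<pi>"
  shows "bij_betw \<phi> S1 S2"
    and "\<forall>F\<in>S1. \<phi> F - B = F - B \<and> card (\<phi> F) = card F"
    and "\<forall>u x. x \<notin> B \<longrightarrow> \<pi> u x = x"
    and "\<forall>F\<in>S1. \<forall>u\<in>F-B. \<phi> F = \<pi> u ` F"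
    and "\<forall>u. u \<notin> B \<longrightarrow> inj_on (\<pi> u) (\<Union>{F\<in>S1. u\<in>F})"
    and "\<forall>F\<in>S1. \<forall>u\<in>F-B. \<forall>u'\<in>F-B. \<forall>x\<in>F. \<pi> u x = \<pi> u' x"
proof -
  note h = assms[unfolded cinv_def]
  show "bij_betw \<phi> S1 S2" using h by (rule conjunct1)
  show "\<forall>F\<in>S1. \<phi> F - B = F - B \<and> card (\<phi> F) = card F" using h[THEN conjunct2] by (rule conjunct1)
  show "\<forall>u x. x \<notin> B \<longrightarrow> \<pi> u x = x" using h[THEN conjunct2, THEN conjunct2] by (rule conjunct1)
  show "\<forall>F\<in>S1. \<forall>u\<in>F-B. \<phi> F = \<pi> u ` F" using h[THEN conjunct2, THEN conjunct2, THEN conjunct2] by (rule conjunct1)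
  show "\<forall>u. u \<notin> B \<longrightarrow> inj_on (\<pi> u) (\<Union>{F\<in>S1. u\<in>F})"
    using h[THEN conjunct2, THEN conjunct2, THEN conjunct2, THEN conjunct2] by (rule conjunct1)
  show "\<forall>F\<in>S1. \<forall>u\<in>F-B. \<forall>u'\<in>F-B. \<forall>x\<in>F. \<pi> u x = \<pi> u' x"
    using h[THEN conjunct2, THEN conjunct2, THEN conjunct2, THEN conjunct2] by (rule conjunct2)
qed

lemma new_faces_mem: "G \<in> new_faces F w \<longleftrightarrow> (\<exists>e. e \<subseteq> F \<and> card e = 2 \<and> G = insert w e)"
  unfolding new_faces_def by auto

lemma preserve:
  assumes I: "cinv B S1 S2 \<phi> \<pi>" and g1: "good i S1" and g2: "good i S2" and Bw: "B \<subseteq> {..<i+3}"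
    and FS: "F \<in> S1"
  shows "\<exists>\<phi>' \<pi>'. cinv B (spl S1 F (i+3)) (spl S2 (\<phi> F) (i+3)) \<phi>' \<pi>'"
proof -
  define w where "w = i + 3"
  have bij: "bij_betw \<phi> S1 S2" using cinvD(1)[OF I] .
  have I2: "\<And>F. F\<in>S1 \<Longrightarrow> \<phi> F - B = F - B \<and> card (\<phi> F) = card F" using cinvD(2)[OF I] by blast
  have I3: "\<And>u x. x \<notin> B \<Longrightarrow> \<pi> u x = x" using cinvD(3)[OF I] by blast
  have I4: "\<And>F u. F\<in>S1 \<Longrightarrow> u\<in>F-B \<Longrightarrow> \<phi> F = \<pi> u ` F" using cinvD(4)[OF I] by blast
  have I5: "\<And>u. u \<notin> B \<Longrightarrow> inj_on (\<pi> u) (\<Union>{F\<in>S1. u\<in>F})" using cinvD(5)[OF I] by blast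
  have I6: "\<And>F u u' x. F\<in>S1 \<Longrightarrow> u\<in>F-B \<Longrightarrow> u'\<in>F-B \<Longrightarrow> x\<in>F \<Longrightarrow> \<pi> u x = \<pi> u' x"
    using cinvD(6)[OF I] by blast
  have wB: "w \<notin> B" using Bw w_def by auto
  have lt1: "\<And>G x. G \<in> S1 \<Longrightarrow> x \<in> G \<Longrightarrow> x < w" using g1 unfolding good_def w_def by auto
  have lt2: "\<And>G x. G \<in> S2 \<Longrightarrow> x \<in> G \<Longrightarrow> x < w" using g2 unfolding good_def w_def by auto
  have c1: "\<And>G. G \<in> S1 \<Longrightarrow> card G = 3" using g1 unfolding good_def by auto
  have c2: "\<And>G. G \<in> S2 \<Longrightarrow> card G = 3" using g2 unfolding good_def by auto
  have phiS: "\<phi> F \<in> S2" using bij FS bij_betwE by blast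
  have wF: "w \<notin> F" using lt1[OF FS] by auto
  have wpF: "w \<notin> \<phi> F" using lt2[OF phiS] by auto
  have finF: "finite F" using c1[OF FS] by (metis card.infinite zero_neq_numeral)
  have finpF: "finite (\<phi> F)" using c2[OF phiS] by (metis card.infinite zero_neq_numeral)
  obtain \<sigma> where sbij: "bij_betw \<sigma> F (\<phi> F)" and sfix: "\<And>x. x \<in> F \<Longrightarrow> x \<notin> B \<Longrightarrow> \<sigma> x = x"
    and sB: "\<And>x. x \<in> F \<Longrightarrow> x \<in> B \<Longrightarrow> \<sigma> x \<in> B"
    and sagr: "\<And>u x. u \<in> F - B \<Longrightarrow> x \<in> F \<Longrightarrow> \<pi> u x = \<sigma> x"
  proof (cases "F - B = {}")
    case True
    then have "\<phi> F - B = {}" using I2[OF FS] by simp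
    then have pB: "\<phi> F \<subseteq> B" by auto
    obtain h where h: "bij_betw h F (\<phi> F)"
      using finite_same_card_bij[OF finF finpF] I2[OF FS] by metis
    show ?thesis
    proof (rule that[of h])
      show "\<And>x. x \<in> F \<Longrightarrow> x \<in> B \<Longrightarrow> h x \<in> B" using h pB bij_betwE by blast
    qed (use h True in auto)
  next
    case False
    then obtain u0 where u0: "u0 \<in> F - B" by auto
    have sub: "F \<subseteq> \<Union>{G\<in>S1. u0\<in>G}" using FS u0 by auto
    have inj0: "inj_on (\<pi> u0) F" using I5[of u0] u0 inj_on_subset[OF _ sub] by auto
    have img: "\<pi> u0 ` F = \<phi> F" using I4[OF FS u0] by simp
    show ?thesis
    proof (rule that[of "\<pi> u0"])
      show "bij_betw (\<pi> u0) F (\<phi> F)" using inj0 img unfolding bij_betw_def by simp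
      show "\<And>x. x \<in> F \<Longrightarrow> x \<notin> B \<Longrightarrow> \<pi> u0 x = x" using I3 by blast
      show "\<And>u x. u \<in> F - B \<Longrightarrow> x \<in> F \<Longrightarrow> \<pi> u x = \<pi> u0 x" using I6[OF FS _ u0] by blast
      fix x assume x: "x \<in> F" "x \<in> B"
      show "\<pi> u0 x \<in> B"
      proof (rule ccontr)
        assume nB: "\<pi> u0 x \<notin> B"
        have "\<pi> u0 x \<in> \<phi> F" using img x by auto
        then have y: "\<pi> u0 x \<in> F" using nB I2[OF FS] by blast
        have "\<pi> u0 (\<pi> u0 x) = \<pi> u0 x" using I3 nB by blast
        then have "\<pi> u0 x = x" using inj0 y x(1) inj_onD by metis
        then show False using nB x by simp
      qed
    qed
  qed
  have sinj: "inj_on \<sigma> F" and simg: "\<sigma> ` F = \<phi> F" using sbij unfolding bij_betw_def by auto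
  define \<phi>' where "\<phi>' = (\<lambda>G. if w \<in> G then insert w (\<sigma> ` (G - {w})) else \<phi> G)"
  define \<pi>' where "\<pi>' = (\<lambda>u. if u = w then (\<lambda>x. if x \<in> F then \<sigma> x else x) else \<pi> u)"
  define S1' where "S1' = spl S1 F w"
  define S2' where "S2' = spl S2 (\<phi> F) w"
  have S1'_cases: "\<And>G. G \<in> S1' \<Longrightarrow> (G \<in> S1 \<and> G \<noteq> F \<and> w \<notin> G) \<or> (\<exists>e. e \<subseteq> F \<and> card e = 2 \<and> G = insert w e)"
  proof -
    fix G assume "G \<in> S1'"
    then have "G \<in> S1 - {F} \<or> G \<in> new_faces F w" unfolding S1'_def spl_def by simp
    then show "(G \<in> S1 \<and> G \<noteq> F \<and> w \<notin> G) \<or> (\<exists>e. e \<subseteq> F \<and> card e = 2 \<and> G = insert w e)"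
    proof
      assume G: "G \<in> S1 - {F}"
      have "w \<notin> G" using lt1[of G w] G by auto
      then show ?thesis using G by simp
    next
      assume "G \<in> new_faces F w" then show ?thesis unfolding new_faces_mem by simp
    qed
  qed
  have phi'_new: "\<And>e. e \<subseteq> F \<Longrightarrow> \<phi>' (insert w e) = insert w (\<sigma> ` e)"
    unfolding \<phi>'_def using wF by (auto simp: insert_Diff_if)
  have sigma_e_B: "\<And>e. e \<subseteq> F \<Longrightarrow> \<sigma> ` e - B = e - B"
  proof -
    fix e assume e: "e \<subseteq> F"
    show "\<sigma> ` e - B = e - B"
    proof
      show "\<sigma> ` e - B \<subseteq> e - B" using e sfix sB by (force)
      show "e - B \<subseteq> \<sigma> ` e - B" using e sfix by (force intro: rev_image_eqI)
    qed
  qed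
  have bij': "bij_betw \<phi>' S1' S2'"
  proof -
    have b1: "bij_betw \<phi>' (S1 - {F}) (S2 - {\<phi> F})"
    proof -
      have inj: "inj_on \<phi> S1" and im: "\<phi> ` S1 = S2" using bij unfolding bij_betw_def by simp_all
      have "\<phi> ` (S1 - {F}) = \<phi> ` S1 - \<phi> ` {F}"
        by (rule inj_on_image_set_diff[OF inj]) (use FS in simp_all)
      then have im': "\<phi> ` (S1 - {F}) = S2 - {\<phi> F}" using im by simp
      have b0: "bij_betw \<phi> (S1 - {F}) (S2 - {\<phi> F})"
        unfolding bij_betw_def using inj_on_diff[OF inj] im' by simp
      have eqs: "\<And>G. G \<in> S1 - {F} \<Longrightarrow> \<phi>' G = \<phi> G"
      proof -
        fix G assume G: "G \<in> S1 - {F}"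
        have "w \<notin> G" using lt1[of G w] G by auto
        then show "\<phi>' G = \<phi> G" unfolding \<phi>'_def by simp
      qed
      show ?thesis using bij_betw_cong[of "S1 - {F}" \<phi>' \<phi> "S2 - {\<phi> F}"] eqs b0 by simp
    qed
    have b2: "bij_betw \<phi>' (new_faces F w) (new_faces (\<phi> F) w)"
    proof -
      have inj: "inj_on \<phi>' (new_faces F w)"
      proof
        fix G G' assume G: "G \<in> new_faces F w" and G': "G' \<in> new_faces F w" and eq: "\<phi>' G = \<phi>' G'"
        obtain e where e: "e \<subseteq> F" "G = insert w e" using G new_faces_mem by auto
        obtain e' where e': "e' \<subseteq> F" "G' = insert w e'" using G' new_faces_mem by auto
        have "insert w (\<sigma> ` e) = insert w (\<sigma> ` e')" using eq phi'_new e e' by simp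
        moreover have "w \<notin> \<sigma> ` e" "w \<notin> \<sigma> ` e'" using e e' simg wpF by auto
        ultimately have "\<sigma> ` e = \<sigma> ` e'" by (simp add: insert_ident)
        then have "e = e'" using inj_on_image_eq_iff[OF sinj e(1) e'(1)] by simp
        then show "G = G'" using e e' by simp
      qed
      have img: "\<phi>' ` new_faces F w = new_faces (\<phi> F) w"
      proof
        show "\<phi>' ` new_faces F w \<subseteq> new_faces (\<phi> F) w"
        proof
          fix H assume "H \<in> \<phi>' ` new_faces F w"
          then obtain e where e: "e \<subseteq> F" "card e = 2" "H = \<phi>' (insert w e)" using new_faces_mem by auto
          have "card (\<sigma> ` e) = 2" using card_image[OF inj_on_subset[OF sinj e(1)]] e(2) by simp
          moreover have "\<sigma> ` e \<subseteq> \<phi> F" using e simg by auto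
          ultimately show "H \<in> new_faces (\<phi> F) w" using e phi'_new new_faces_mem by auto
        qed
        show "new_faces (\<phi> F) w \<subseteq> \<phi>' ` new_faces F w"
        proof
          fix H assume "H \<in> new_faces (\<phi> F) w"
          then obtain e' where e': "e' \<subseteq> \<phi> F" "card e' = 2" "H = insert w e'" using new_faces_mem by auto
          define e where "e = F \<inter> \<sigma> -` e'"
          have "\<sigma> ` (F \<inter> \<sigma> -` e') = \<sigma> ` F \<inter> e'" by blast
          then have se: "\<sigma> ` e = e'" unfolding e_def using e'(1) simg by auto
          have eF: "e \<subseteq> F" unfolding e_def by auto
          have "card e = card (\<sigma> ` e)" using card_image[OF inj_on_subset[OF sinj eF]] by simp
          then have "card e = 2" using se e' by simp
          then have "insert w e \<in> new_faces F w" using eF new_faces_mem by auto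
          moreover have "H = \<phi>' (insert w e)" using phi'_new[OF eF] se e' by simp
          ultimately show "H \<in> \<phi>' ` new_faces F w" by auto
        qed
      qed
      show ?thesis using inj img unfolding bij_betw_def by simp
    qed
    have disj: "(S2 - {\<phi> F}) \<inter> new_faces (\<phi> F) w = {}"
    proof -
      { fix G assume G: "G \<in> S2" "G \<in> new_faces (\<phi> F) w"
        then have "w \<in> G" using new_faces_props(3)[OF c2[OF phiS] wpF] by blast
        then have False using lt2[OF G(1), of w] by simp }
      then show ?thesis by blast
    qed
    show ?thesis unfolding S1'_def S2'_def spl_def using bij_betw_combine[OF b1 b2 disj] by simp
  qed
  have P2: "\<forall>G\<in>S1'. \<phi>' G - B = G - B \<and> card (\<phi>' G) = card G"
  proof
    fix G assume "G \<in> S1'"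
    then consider "G \<in> S1" "w \<notin> G" | e where "e \<subseteq> F" "card e = 2" "G = insert w e"
      using S1'_cases by blast
    then show "\<phi>' G - B = G - B \<and> card (\<phi>' G) = card G"
    proof cases
      case 1 then show ?thesis using I2 unfolding \<phi>'_def by simp
    next
      case (2 e)
      have fe: "finite e" using 2 finF finite_subset by auto
      have we: "w \<notin> e" "w \<notin> \<sigma> ` e" using 2 wF simg wpF by auto
      have "card (\<sigma> ` e) = card e" using card_image[OF inj_on_subset[OF sinj 2(1)]] by simp
      then show ?thesis using 2 phi'_new[OF 2(1)] sigma_e_B[OF 2(1)] we fe wB by auto
    qed
  qed
  have P3: "\<forall>u x. x \<notin> B \<longrightarrow> \<pi>' u x = x" unfolding \<pi>'_def using I3 sfix by auto
  have P4: "\<forall>G\<in>S1'. \<forall>u\<in>G-B. \<phi>' G = \<pi>' u ` G"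
  proof (intro ballI)
    fix G u assume G: "G \<in> S1'" and u: "u \<in> G - B"
    from G consider "G \<in> S1" "w \<notin> G" | e where "e \<subseteq> F" "card e = 2" "G = insert w e"
      using S1'_cases by blast
    then show "\<phi>' G = \<pi>' u ` G"
    proof cases
      case 1
      then have "u \<noteq> w" using u by auto
      then show ?thesis using 1 I4 u unfolding \<phi>'_def \<pi>'_def by simp
    next
      case (2 e)
      show ?thesis
      proof (cases "u = w")
        case True
        have "\<pi>' u ` G = insert w (\<sigma> ` e)" using True 2 wF unfolding \<pi>'_def by auto
        then show ?thesis using phi'_new[OF 2(1)] 2 by simp
      next
        case False
        then have uF: "u \<in> F - B" using u 2 by auto
        have "\<pi>' u ` G = insert (\<pi> u w) (\<pi> u ` e)" using False 2 unfolding \<pi>'_def by auto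
        also have "\<pi> u w = w" using I3 wB by blast
        also have "\<pi> u ` e = \<sigma> ` e" by (intro image_cong refl) (use sagr[OF uF] 2(1) in blast)
        finally show ?thesis using phi'_new[OF 2(1)] 2 by simp
      qed
    qed
  qed
  have P5: "\<forall>u. u \<notin> B \<longrightarrow> inj_on (\<pi>' u) (\<Union>{G\<in>S1'. u\<in>G})"
  proof (intro allI impI)
    fix u assume uB: "u \<notin> B"
    show "inj_on (\<pi>' u) (\<Union>{G\<in>S1'. u\<in>G})"
    proof (cases "u = w")
      case True
      have sub: "\<Union>{G\<in>S1'. u\<in>G} \<subseteq> insert w F" using S1'_cases True by fastforce
      have i1: "inj_on (\<lambda>x. if x \<in> F then \<sigma> x else x) (insert w F)"
        using sinj wF wpF simg by (auto simp: inj_on_def)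
      have eq: "\<pi>' u = (\<lambda>x. if x \<in> F then \<sigma> x else x)" unfolding \<pi>'_def using True by simp
      show ?thesis unfolding eq by (rule inj_on_subset[OF i1 sub])
    next
      case False
      define U where "U = \<Union>{G\<in>S1. u\<in>G}"
      have sub: "\<Union>{G\<in>S1'. u\<in>G} \<subseteq> insert w U"
      proof
        fix x assume "x \<in> \<Union>{G\<in>S1'. u\<in>G}"
        then obtain G where G: "G \<in> S1'" "u \<in> G" "x \<in> G" by auto
        from G(1) consider "G \<in> S1" | e where "e \<subseteq> F" "card e = 2" "G = insert w e"
          using S1'_cases by blast
        then show "x \<in> insert w U"
        proof cases
          case 1 then show ?thesis using G unfolding U_def by auto
        next
          case (2 e) then show ?thesis using G FS False unfolding U_def by auto
        qed
      qed
      have injU: "inj_on (\<pi> u) U" using I5 uB unfolding U_def by blast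
      have pw: "\<pi> u w = w" using I3 wB by blast
      have nw: "w \<notin> \<pi> u ` U"
      proof
        assume "w \<in> \<pi> u ` U"
        then obtain x G where "G \<in> S1" "u \<in> G" "x \<in> G" "w = \<pi> u x" unfolding U_def by auto
        then have "w \<in> \<phi> G" using I4[of G u] uB by auto
        moreover have "\<phi> G \<in> S2" using bij \<open>G \<in> S1\<close> bij_betwE by blast
        ultimately show False using lt2 by blast
      qed
      have i1: "inj_on (\<pi> u) (insert w U)" using injU pw nw by auto
      have eq: "\<pi>' u = \<pi> u" unfolding \<pi>'_def using False by simp
      show ?thesis unfolding eq by (rule inj_on_subset[OF i1 sub])
    qed
  qed
  have P6: "\<forall>G\<in>S1'. \<forall>u\<in>G-B. \<forall>u'\<in>G-B. \<forall>x\<in>G. \<pi>' u x = \<pi>' u' x"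
  proof (intro ballI)
    fix G u u' x assume G: "G \<in> S1'" and u: "u \<in> G - B" and u': "u' \<in> G - B" and x: "x \<in> G"
    from G consider "G \<in> S1" "w \<notin> G" | e where "e \<subseteq> F" "card e = 2" "G = insert w e"
      using S1'_cases by blast
    then show "\<pi>' u x = \<pi>' u' x"
    proof cases
      case 1
      then have "u \<noteq> w" "u' \<noteq> w" using u u' by auto
      then show ?thesis using I6[OF 1(1) u u' x] unfolding \<pi>'_def by simp
    next
      case (2 e)
      have val: "\<And>v. v \<in> G - B \<Longrightarrow> \<pi>' v x = (if x \<in> F then \<sigma> x else x)"
      proof -
        fix v assume v: "v \<in> G - B"
        show "\<pi>' v x = (if x \<in> F then \<sigma> x else x)"
        proof (cases "v = w")
          case True then show ?thesis unfolding \<pi>'_def by simp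
        next
          case False
          then have vF: "v \<in> F - B" using v 2 by auto
          show ?thesis
          proof (cases "x \<in> F")
            case True then show ?thesis using sagr[OF vF True] False unfolding \<pi>'_def by simp
          next
            case xF: False
            then have "x = w" using x 2 by auto
            then show ?thesis using xF False I3 wB unfolding \<pi>'_def by simp
          qed
        qed
      qed
      show ?thesis using val[OF u] val[OF u'] by simp
    qed
  qed
  have C: "cinv B S1' S2' \<phi>' \<pi>'" unfolding cinv_def
    by (rule conjI[OF bij' conjI[OF P2 conjI[OF P3 conjI[OF P4 conjI[OF P5 P6]]]]])
  have X: "cinv B (spl S1 F (i+3)) (spl S2 (\<phi> F) (i+3)) \<phi>' \<pi>'" using C unfolding S1'_def S2'_def w_def .
  show ?thesis by (rule exI, rule exI, rule X)
qed

lemma deg_eq: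
  assumes I: "cinv B S1 S2 \<phi> \<pi>" and u: "u \<notin> B"
  shows "(u \<in> \<Union>S1 \<longleftrightarrow> u \<in> \<Union>S2) \<and> ran_degree S1 u = ran_degree S2 u"
proof -
  have bij: "bij_betw \<phi> S1 S2" using cinvD(1)[OF I] .
  have I2: "\<And>F. F\<in>S1 \<Longrightarrow> \<phi> F - B = F - B" using cinvD(2)[OF I] by blast
  have I3: "\<And>u x. x \<notin> B \<Longrightarrow> \<pi> u x = x" using cinvD(3)[OF I] by blast
  have I4: "\<And>F u. F\<in>S1 \<Longrightarrow> u\<in>F-B \<Longrightarrow> \<phi> F = \<pi> u ` F" using cinvD(4)[OF I] by blast
  have I5: "\<And>u. u \<notin> B \<Longrightarrow> inj_on (\<pi> u) (\<Union>{F\<in>S1. u\<in>F})" using cinvD(5)[OF I] by blast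
  define U where "U = {F\<in>S1. u\<in>F}"
  have img: "\<phi> ` S1 = S2" using bij by (simp add: bij_betw_def)
  have mem: "\<And>F. F \<in> S1 \<Longrightarrow> u \<in> \<phi> F \<longleftrightarrow> u \<in> F"
  proof -
    fix F assume F: "F \<in> S1"
    have "u \<in> \<phi> F \<longleftrightarrow> u \<in> \<phi> F - B" using u by simp
    also have "\<dots> \<longleftrightarrow> u \<in> F - B" using I2[OF F] by simp
    finally show "u \<in> \<phi> F \<longleftrightarrow> u \<in> F" using u by simp
  qed
  have faces2: "{G\<in>S2. u\<in>G} = \<phi> ` U"
  proof
    show "{G\<in>S2. u\<in>G} \<subseteq> \<phi> ` U"
    proof
      fix G assume "G \<in> {G\<in>S2. u\<in>G}"
      then obtain F where F: "F \<in> S1" "G = \<phi> F" "u \<in> G" using img by auto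
      then show "G \<in> \<phi> ` U" using mem[OF F(1)] unfolding U_def by auto
    qed
    show "\<phi> ` U \<subseteq> {G\<in>S2. u\<in>G}" using mem img unfolding U_def by auto
  qed
  have U2: "\<Union>{G\<in>S2. u\<in>G} = \<pi> u ` \<Union>U"
  proof -
    have "\<Union>{G\<in>S2. u\<in>G} = (\<Union>F\<in>U. \<phi> F)" using faces2 by simp
    also have "\<dots> = (\<Union>F\<in>U. \<pi> u ` F)"
    proof (rule SUP_cong[OF refl])
      fix F assume "F \<in> U"
      then show "\<phi> F = \<pi> u ` F" using I4[of F u] u unfolding U_def by simp
    qed
    also have "\<dots> = \<pi> u ` \<Union>U" by auto
    finally show ?thesis .
  qed
  have nb: "\<And>S. {x. x \<noteq> u \<and> (\<exists>F\<in>S. u \<in> F \<and> x \<in> F)} = \<Union>{F\<in>S. u\<in>F} - {u}" by auto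
  have memU: "u \<in> \<Union>S1 \<longleftrightarrow> U \<noteq> {}" unfolding U_def by auto
  have memU2: "u \<in> \<Union>S2 \<longleftrightarrow> {G\<in>S2. u\<in>G} \<noteq> {}" by auto
  have part1: "u \<in> \<Union>S1 \<longleftrightarrow> u \<in> \<Union>S2" using memU memU2 faces2 by auto
  have "ran_degree S1 u = ran_degree S2 u"
  proof (cases "U = {}")
    case True
    then have "{G\<in>S2. u\<in>G} = {}" using faces2 by simp
    then have e2: "{G\<in>S2. u\<in>G} = {}" .
    have e1: "{F\<in>S1. u\<in>F} = {}" using True unfolding U_def .
    have n1: "{x. x \<noteq> u \<and> (\<exists>F\<in>S1. u \<in> F \<and> x \<in> F)} = {}" using e1 by blast
    have n2: "{x. x \<noteq> u \<and> (\<exists>F\<in>S2. u \<in> F \<and> x \<in> F)} = {}" using e2 by blast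
    show ?thesis unfolding ran_degree_def n1 n2 ..
  next
    case False
    then have uU: "u \<in> \<Union>U" unfolding U_def by auto
    have inj: "inj_on (\<pi> u) (\<Union>U)" using I5 u unfolding U_def by blast
    have pu: "\<pi> u u = u" using I3 u by blast
    have "\<Union>{G\<in>S2. u\<in>G} - {u} = \<pi> u ` (\<Union>U - {u})"
      using U2 inj_on_image_set_diff[OF inj, of "\<Union>U" "{u}"] uU pu by auto
    moreover have "inj_on (\<pi> u) (\<Union>U - {u})" using inj_on_subset[OF inj Diff_subset] .
    ultimately have "card (\<Union>{G\<in>S2. u\<in>G} - {u}) = card (\<Union>U - {u})" by (simp add: card_image)
    then show ?thesis unfolding ran_degree_def nb U_def by simp
  qed
  then show ?thesis using part1 by simp
qed

lemma card_diff_bound: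
  assumes "finite A1" "finite A2" "finite B" "A1 - B = A2 - B"
  shows "card A1 \<le> card A2 + card B"
proof -
  have "card A1 \<le> card ((A1 - B) \<union> B)" using assms by (intro card_mono) auto
  also have "\<dots> \<le> card (A1 - B) + card B" by (rule card_Un_le)
  also have "card (A1 - B) = card (A2 - B)" using assms by simp
  also have "card (A2 - B) \<le> card A2" using assms by (intro card_mono) auto
  finally show ?thesis by simp
qed

lemma Z_close:
  assumes I: "cinv B S1 S2 \<phi> \<pi>" and f1: "finite (\<Union>S1)" and f2: "finite (\<Union>S2)" and fB: "finite B"
  shows "\<bar>real (Z k S1) - real (Z k S2)\<bar> \<le> card B"
proof -
  define A1 where "A1 = {v \<in> ran_vertices S1. ran_degree S1 v = k}"
  define A2 where "A2 = {v \<in> ran_vertices S2. ran_degree S2 v = k}"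
  have eq: "A1 - B = A2 - B"
  proof (rule set_eqI)
    fix v
    show "v \<in> A1 - B \<longleftrightarrow> v \<in> A2 - B"
    proof (cases "v \<in> B")
      case True then show ?thesis by simp
    next
      case False
      from deg_eq[OF I False] show ?thesis unfolding A1_def A2_def ran_vertices_def using False by simp
    qed
  qed
  have fA1: "finite A1" by (rule finite_subset[OF _ f1]) (auto simp: A1_def ran_vertices_def)
  have fA2: "finite A2" by (rule finite_subset[OF _ f2]) (auto simp: A2_def ran_vertices_def)
  have "card A1 \<le> card A2 + card B" using card_diff_bound[OF fA1 fA2 fB eq] .
  moreover have "card A2 \<le> card A1 + card B" using card_diff_bound[OF fA2 fA1 fB eq[symmetric]] .
  ultimately show ?thesis unfolding Z_def A1_def[symmetric] A2_def[symmetric] by linarith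
qed

definition m :: "nat \<Rightarrow> nat \<Rightarrow> ran_state \<Rightarrow> nat \<Rightarrow> real" where
  "m k i S n = measure_pmf.expectation (ran_from i S n) (\<lambda>S'. real (Z k S'))"

lemma m_0: "m k i S 0 = real (Z k S)" unfolding m_def by simp

lemma m_Suc: "good i S \<Longrightarrow> m k i S (Suc n) = (\<Sum>F\<in>S. m k (Suc i) (spl S F (i+3)) n) / card S"
  unfolding m_def by (rule Ex_Suc)

lemma good_finite_union: "good i S \<Longrightarrow> finite (\<Union>S)"
  unfolding good_def by (auto intro: finite_subset)

lemma coupling_E:
  assumes "good i S1" "good i S2" "B \<subseteq> {..<i+3}" "cinv B S1 S2 \<phi> \<pi>"
  shows "\<bar>m k i S1 n - m k i S2 n\<bar> \<le> card B"
  using assms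
proof (induction n arbitrary: i S1 S2 \<phi> \<pi>)
  case 0
  have "finite B" using 0 finite_subset by blast
  then show ?case unfolding m_0 using Z_close[OF 0(4) good_finite_union[OF 0(1)] good_finite_union[OF 0(2)]] by simp
next
  case (Suc n)
  have bij: "bij_betw \<phi> S1 S2" using cinvD(1)[OF Suc.prems(4)] .
  have cardeq: "card S1 = card S2" using bij_betw_same_card[OF bij] .
  have cpos: "card S1 > 0" using Suc.prems(1) unfolding good_def by auto
  have reidx: "(\<Sum>G\<in>S2. m k (Suc i) (spl S2 G (i+3)) n) = (\<Sum>F\<in>S1. m k (Suc i) (spl S2 (\<phi> F) (i+3)) n)"
    using sum.reindex_bij_betw[OF bij, of "\<lambda>G. m k (Suc i) (spl S2 G (i+3)) n"] by simp
  have each: "\<bar>m k (Suc i) (spl S1 F (i+3)) n - m k (Suc i) (spl S2 (\<phi> F) (i+3)) n\<bar> \<le> card B"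
    if F: "F \<in> S1" for F
  proof -
    obtain \<phi>' \<pi>' where I': "cinv B (spl S1 F (i+3)) (spl S2 (\<phi> F) (i+3)) \<phi>' \<pi>'"
      using preserve[OF Suc.prems(4,1,2,3) F] by blast
    have "\<phi> F \<in> S2" using bij F bij_betwE by blast
    moreover have "B \<subseteq> {..<Suc i + 3}" using Suc.prems(3) by auto
    ultimately show ?thesis using Suc.IH[OF good_spl[OF Suc.prems(1) F] good_spl[OF Suc.prems(2)] _ I'] by blast
  qed
  have "\<bar>(\<Sum>F\<in>S1. m k (Suc i) (spl S1 F (i+3)) n) - (\<Sum>F\<in>S1. m k (Suc i) (spl S2 (\<phi> F) (i+3)) n)\<bar>
      \<le> (\<Sum>F\<in>S1. \<bar>m k (Suc i) (spl S1 F (i+3)) n - m k (Suc i) (spl S2 (\<phi> F) (i+3)) n\<bar>)"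
    by (simp add: sum_subtractf[symmetric] sum_abs)
  also have "\<dots> \<le> (\<Sum>F\<in>S1. real (card B))" by (intro sum_mono each)
  also have "\<dots> = card S1 * real (card B)" by simp
  finally have le: "\<bar>(\<Sum>F\<in>S1. m k (Suc i) (spl S1 F (i+3)) n) - (\<Sum>F\<in>S1. m k (Suc i) (spl S2 (\<phi> F) (i+3)) n)\<bar>
      \<le> card S1 * real (card B)" .
  have "m k i S1 (Suc n) - m k i S2 (Suc n) =
     ((\<Sum>F\<in>S1. m k (Suc i) (spl S1 F (i+3)) n) - (\<Sum>F\<in>S1. m k (Suc i) (spl S2 (\<phi> F) (i+3)) n)) / card S1"
    using m_Suc[OF Suc.prems(1)] m_Suc[OF Suc.prems(2)] reidx cardeq by (simp add: diff_divide_distrib)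
  then have "\<bar>m k i S1 (Suc n) - m k i S2 (Suc n)\<bar> =
     \<bar>(\<Sum>F\<in>S1. m k (Suc i) (spl S1 F (i+3)) n) - (\<Sum>F\<in>S1. m k (Suc i) (spl S2 (\<phi> F) (i+3)) n)\<bar> / card S1"
    by simp
  also have "\<dots> \<le> card S1 * real (card B) / card S1" using le cpos by (intro divide_right_mono) auto
  also have "\<dots> = card B" using cpos by simp
  finally show ?case .
qed

lemma bdd_diff:
  assumes g: "good i S" and F1: "F1 \<in> S" and F2: "F2 \<in> S"
  shows "\<bar>m k (Suc i) (spl S F1 (i+3)) n - m k (Suc i) (spl S F2 (i+3)) n\<bar> \<le> 6"
proof -
  define B where "B = F1 \<union> F2"
  define \<phi>0 where "\<phi>0 = (\<lambda>G. if G = F1 then F2 else if G = F2 then F1 else G)"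
  have c: "\<And>G. G \<in> S \<Longrightarrow> card G = 3" and sub: "\<And>G. G \<in> S \<Longrightarrow> G \<subseteq> {..<i+3}"
    using g unfolding good_def by auto
  have Bsub: "B \<subseteq> {..<i+3}" using sub F1 F2 unfolding B_def by auto
  have cardB: "card B \<le> 6" unfolding B_def using card_Un_le[of F1 F2] c F1 F2 by simp
  have bij0: "bij_betw \<phi>0 S S"
    by (rule bij_betw_byWitness[where f'=\<phi>0]) (auto simp: \<phi>0_def F1 F2)
  have "cinv B S S \<phi>0 (\<lambda>u x. x)"
    unfolding cinv_def
  proof (intro conjI bij0 ballI allI impI)
    fix G assume G: "G \<in> S"
    show "\<phi>0 G - B = G - B" unfolding \<phi>0_def B_def by auto
    show "card (\<phi>0 G) = card G" unfolding \<phi>0_def using c G F1 F2 by auto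
  next
    fix G u assume G: "G \<in> S" and u: "u \<in> G - B"
    then have "G \<noteq> F1" "G \<noteq> F2" unfolding B_def by auto
    then show "\<phi>0 G = (\<lambda>x. x) ` G" unfolding \<phi>0_def by simp
  qed auto
  then obtain \<phi>' \<pi>' where I': "cinv B (spl S F1 (i+3)) (spl S F2 (i+3)) \<phi>' \<pi>'"
    using preserve[OF _ g g Bsub F1, of \<phi>0 "\<lambda>u x. x"] unfolding \<phi>0_def by auto
  have "\<bar>m k (Suc i) (spl S F1 (i+3)) n - m k (Suc i) (spl S F2 (i+3)) n\<bar> \<le> card B"
    by (rule coupling_E[OF good_spl[OF g F1] good_spl[OF g F2] _ I']) (use Bsub in auto)
  then show ?thesis using cardB by linarith
qed

lemma hoeff_pos:
  fixes y :: "'a \<Rightarrow> real"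
  assumes fin: "finite A" and ne: "A \<noteq> {}" and rng: "\<forall>x\<in>A. y x \<in> {a..b}" and h: "h > 0"
  shows "(\<Sum>x\<in>A. exp (h * (y x - (\<Sum>z\<in>A. y z) / card A))) / card A \<le> exp (h\<^sup>2 * (b-a)\<^sup>2 / 8)"
proof -
  define M where "M = measure_pmf (pmf_of_set A)"
  interpret interval_bounded_random_variable M y a b
    unfolding M_def
    by unfold_locales (use rng fin ne in \<open>auto simp: AE_measure_pmf_iff\<close>)
  have E: "expectation y = (\<Sum>z\<in>A. y z) / card A" unfolding M_def using fin ne by (simp add: integral_pmf_of_set)
  have H: "(\<integral>\<^sup>+ x. ennreal (exp (h * (y x - expectation y))) \<partial>M) \<le> ennreal (exp (h\<^sup>2 * (b-a)\<^sup>2 / 8))"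
    using Hoeffdings_lemma_nn_integral[OF h] .
  have int: "integrable M (\<lambda>x. exp (h * (y x - expectation y)))"
    unfolding M_def using fin ne by (intro integrable_measure_pmf_finite) simp
  have "(\<integral>\<^sup>+ x. ennreal (exp (h * (y x - expectation y))) \<partial>M) = ennreal (integral\<^sup>L M (\<lambda>x. exp (h * (y x - expectation y))))"
    by (rule nn_integral_eq_integral[OF int]) simp
  also have "integral\<^sup>L M (\<lambda>x. exp (h * (y x - expectation y))) = (\<Sum>x\<in>A. exp (h * (y x - (\<Sum>z\<in>A. y z) / card A))) / card A"
    unfolding M_def E[unfolded M_def] using fin ne by (simp add: integral_pmf_of_set)
  finally show ?thesis using H by simp
qed

lemma hoeff_avg:
  fixes y :: "'a \<Rightarrow> real"
  assumes fin: "finite A" and ne: "A \<noteq> {}" and rng: "\<forall>x\<in>A. y x \<in> {a..b}"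
  shows "(\<Sum>x\<in>A. exp (h * (y x - (\<Sum>z\<in>A. y z) / card A))) / card A \<le> exp (h\<^sup>2 * (b-a)\<^sup>2 / 8)"
proof (cases "h > 0")
  case True then show ?thesis using hoeff_pos[OF assms] by blast
next
  case False
  show ?thesis
  proof (cases "h = 0")
    case True
    have "card A > 0" using fin ne by (simp add: card_gt_0_iff)
    then show ?thesis using True by simp
  next
    case False
    then have h': "-h > 0" using \<open>\<not> h > 0\<close> by simp
    have rng': "\<forall>x\<in>A. - y x \<in> {-b..-a}" using rng by auto
    have "(\<Sum>x\<in>A. exp ((-h) * (- y x - (\<Sum>z\<in>A. - y z) / card A))) / card A \<le> exp ((-h)\<^sup>2 * (-a - -b)\<^sup>2 / 8)"
      using hoeff_pos[OF fin ne rng' h'] .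
    moreover have "\<And>x. (-h) * (- y x - (\<Sum>z\<in>A. - y z) / card A) = h * (y x - (\<Sum>z\<in>A. y z) / card A)"
      by (simp add: sum_negf algebra_simps)
    moreover have "(-h)\<^sup>2 * (-a - -b)\<^sup>2 = h\<^sup>2 * (b-a)\<^sup>2" by (simp add: power2_eq_square algebra_simps)
    ultimately show ?thesis by simp
  qed
qed

lemma chernoff:
  fixes p :: "'a pmf" and Y :: "'a \<Rightarrow> real"
  assumes fin: "finite (set_pmf p)"
  shows "measure_pmf.prob p {x. a \<le> Y x} \<le> exp (-a) * measure_pmf.expectation p (\<lambda>x. exp (Y x))"
proof -
  have "measure_pmf.prob p {x. a \<le> Y x} = measure_pmf.expectation p (indicator {x. a \<le> Y x})"
    by simp
  also have "\<dots> \<le> measure_pmf.expectation p (\<lambda>x. exp (-a) * exp (Y x))"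
  proof (rule integral_mono)
    show "integrable (measure_pmf p) (indicator {x. a \<le> Y x} :: 'a \<Rightarrow> real)"
      using fin by (rule integrable_measure_pmf_finite)
    show "integrable (measure_pmf p) (\<lambda>x. exp (-a) * exp (Y x))"
      using fin by (rule integrable_measure_pmf_finite)
    fix x
    show "indicator {x. a \<le> Y x} x \<le> exp (-a) * exp (Y x)"
    proof (cases "a \<le> Y x")
      case True
      then have "1 \<le> exp (Y x - a)" by simp
      then show ?thesis using True by (simp add: exp_diff exp_minus field_simps)
    qed simp
  qed
  also have "\<dots> = exp (-a) * measure_pmf.expectation p (\<lambda>x. exp (Y x))" by simp
  finally show ?thesis .
qed

lemma moment:
  assumes "good i S"
  shows "measure_pmf.expectation (ran_from i S n) (\<lambda>S'. exp (h * (real (Z k S') - m k i S n)))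
           \<le> exp (real n * (h\<^sup>2 * 36 / 8))"
  using assms
proof (induction n arbitrary: i S)
  case 0
  then show ?case by (simp add: m_0)
next
  case (Suc n)
  define w where "w = i + 3"
  define mF where "mF F = m k (Suc i) (spl S F w) n" for F
  define M where "M = m k i S (Suc n)"
  define c where "c = exp (real n * (h\<^sup>2 * 36 / 8))"
  have fin: "finite S" "S \<noteq> {}" using Suc.prems unfolding good_def by auto
  have Mdef: "M = (\<Sum>F\<in>S. mF F) / card S" using m_Suc[OF Suc.prems] unfolding M_def mF_def w_def .
  have step: "measure_pmf.expectation (ran_from (Suc i) (spl S F w) n) (\<lambda>S'. exp (h * (real (Z k S') - M)))
      \<le> exp (h * (mF F - M)) * c" if F: "F \<in> S" for F
  proof -
    have eq: "\<And>S'. exp (h * (real (Z k S') - M)) = exp (h * (mF F - M)) * exp (h * (real (Z k S') - mF F))"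
      by (simp add: exp_add[symmetric] algebra_simps)
    have "measure_pmf.expectation (ran_from (Suc i) (spl S F w) n) (\<lambda>S'. exp (h * (real (Z k S') - M)))
        = exp (h * (mF F - M)) * measure_pmf.expectation (ran_from (Suc i) (spl S F w) n) (\<lambda>S'. exp (h * (real (Z k S') - mF F)))"
      unfolding eq by simp
    also have "\<dots> \<le> exp (h * (mF F - M)) * c"
      using Suc.IH[OF good_spl[OF Suc.prems F]] unfolding mF_def w_def c_def by (intro mult_left_mono) auto
    finally show ?thesis .
  qed
  have avg: "(\<Sum>F\<in>S. exp (h * (mF F - M))) / card S \<le> exp (h\<^sup>2 * 36 / 8)"
  proof -
    define a where "a = Min (mF ` S)"
    have ain: "a \<in> mF ` S" unfolding a_def using fin by (intro Min_in) auto
    then obtain F0 where F0: "F0 \<in> S" "a = mF F0" by auto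
    have rng: "\<forall>F\<in>S. mF F \<in> {a..a+6}"
    proof
      fix F assume F: "F \<in> S"
      have "a \<le> mF F" unfolding a_def using fin F by (intro Min_le) auto
      moreover have "\<bar>mF F - mF F0\<bar> \<le> 6" unfolding mF_def w_def using bdd_diff[OF Suc.prems F F0(1)] .
      ultimately show "mF F \<in> {a..a+6}" using F0 by auto
    qed
    have "(\<Sum>F\<in>S. exp (h * (mF F - (\<Sum>z\<in>S. mF z) / card S))) / card S \<le> exp (h\<^sup>2 * (a + 6 - a)\<^sup>2 / 8)"
      by (rule hoeff_avg[OF fin rng])
    then show ?thesis unfolding Mdef by (simp add: power2_eq_square)
  qed
  have "measure_pmf.expectation (ran_from i S (Suc n)) (\<lambda>S'. exp (h * (real (Z k S') - M)))
      = (\<Sum>F\<in>S. measure_pmf.expectation (ran_from (Suc i) (spl S F w) n) (\<lambda>S'. exp (h * (real (Z k S') - M)))) / card S"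
    using Ex_Suc[OF Suc.prems] unfolding w_def .
  also have "\<dots> \<le> (\<Sum>F\<in>S. exp (h * (mF F - M)) * c) / card S"
    by (intro divide_right_mono sum_mono step) auto
  also have "\<dots> = ((\<Sum>F\<in>S. exp (h * (mF F - M))) / card S) * c" by (simp add: sum_distrib_right)
  also have "\<dots> \<le> exp (h\<^sup>2 * 36 / 8) * c" using avg unfolding c_def by (intro mult_right_mono) auto
  also have "\<dots> = exp (real (Suc n) * (h\<^sup>2 * 36 / 8))" unfolding c_def by (simp add: exp_add[symmetric] algebra_simps)
  finally show ?case unfolding M_def .
qed

theorem mainTheorem4:
  fixes lam :: real and t k :: nat
  assumes "lam > 0" and "t \<ge> 1" and "k \<ge> 3"
  shows "measure_pmf.prob (ran t)
           {S. \<bar>real (Z k S) - measure_pmf.expectation (ran t) (\<lambda>S. real (Z k S))\<bar> \<ge> lam}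
         \<le> 2 * exp (- (lam ^ 2) / (72 * real t))"
proof -
  define S0 where "S0 = ({{0,1,2}} :: ran_state)"
  have P: "ran t = ran_from 0 S0 t" using ran_eq unfolding S0_def .
  define mu where "mu = m k 0 S0 t"
  have mu: "measure_pmf.expectation (ran t) (\<lambda>S. real (Z k S)) = mu" unfolding mu_def m_def P ..
  have g0: "good 0 S0" unfolding S0_def by (rule good0)
  have fin: "finite (set_pmf (ran t))" unfolding P using ran_from_props[OF g0] by blast
  have tpos: "real t > 0" using assms by simp
  define h where "h = lam / (9 * real t)"
  have hpos: "h > 0" unfolding h_def using assms tpos by simp
  have mom: "measure_pmf.expectation (ran t) (\<lambda>S. exp (g * (real (Z k S) - mu))) \<le> exp (real t * (g\<^sup>2 * 36 / 8))" for g
    unfolding P mu_def using moment[OF g0] by simp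
  have expo: "- (h * lam) + real t * (h\<^sup>2 * 36 / 8) = - (lam ^ 2) / (18 * real t)"
  proof -
    have e1: "h * lam = lam ^ 2 / (9 * real t)" unfolding h_def by (simp add: power2_eq_square)
    have e2: "real t * (h\<^sup>2 * 36 / 8) = lam ^ 2 / (18 * real t)"
      unfolding h_def using tpos by (simp add: power2_eq_square field_simps)
    have e3: "lam ^ 2 / (9 * real t) = 2 * (lam ^ 2 / (18 * real t))" by (simp add: field_simps)
    have e4: "- (lam ^ 2) / (18 * real t) = - (lam ^ 2 / (18 * real t))" by simp
    show ?thesis using e1 e2 e3 e4 by linarith
  qed
  have tail: "measure_pmf.prob (ran t) {S. h * lam \<le> g * (real (Z k S) - mu)} \<le> exp (- (lam ^ 2) / (18 * real t))"
    if g: "g\<^sup>2 = h\<^sup>2" for g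
  proof -
    have "measure_pmf.prob (ran t) {S. h * lam \<le> g * (real (Z k S) - mu)}
        \<le> exp (- (h * lam)) * measure_pmf.expectation (ran t) (\<lambda>S. exp (g * (real (Z k S) - mu)))"
      by (rule chernoff[OF fin])
    also have "\<dots> \<le> exp (- (h * lam)) * exp (real t * (h\<^sup>2 * 36 / 8))"
      using mom[of g] g by (intro mult_left_mono) auto
    also have "\<dots> = exp (- (h * lam) + real t * (h\<^sup>2 * 36 / 8))" by (rule exp_add[symmetric])
    also have "\<dots> = exp (- (lam ^ 2) / (18 * real t))" unfolding expo ..
    finally show ?thesis .
  qed
  have sub: "{S. \<bar>real (Z k S) - mu\<bar> \<ge> lam} \<subseteq>
      {S. h * lam \<le> h * (real (Z k S) - mu)} \<union> {S. h * lam \<le> (-h) * (real (Z k S) - mu)}"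
  proof
    fix S assume "S \<in> {S. \<bar>real (Z k S) - mu\<bar> \<ge> lam}"
    then have "lam \<le> real (Z k S) - mu \<or> lam \<le> - (real (Z k S) - mu)" by (auto simp: abs_if split: if_splits)
    then show "S \<in> {S. h * lam \<le> h * (real (Z k S) - mu)} \<union> {S. h * lam \<le> (-h) * (real (Z k S) - mu)}"
    proof
      assume "lam \<le> real (Z k S) - mu"
      then have "h * lam \<le> h * (real (Z k S) - mu)" using hpos by (intro mult_left_mono) auto
      then show ?thesis by simp
    next
      assume "lam \<le> - (real (Z k S) - mu)"
      then have "h * lam \<le> h * (- (real (Z k S) - mu))" using hpos by (intro mult_left_mono) auto
      also have "h * (- (real (Z k S) - mu)) = (-h) * (real (Z k S) - mu)" by (simp add: algebra_simps)
      finally show ?thesis by blast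
    qed
  qed
  have "measure_pmf.prob (ran t) {S. \<bar>real (Z k S) - mu\<bar> \<ge> lam}
      \<le> measure_pmf.prob (ran t) ({S. h * lam \<le> h * (real (Z k S) - mu)} \<union> {S. h * lam \<le> (-h) * (real (Z k S) - mu)})"
    using sub by (intro measure_pmf.finite_measure_mono) auto
  also have "\<dots> \<le> measure_pmf.prob (ran t) {S. h * lam \<le> h * (real (Z k S) - mu)} + measure_pmf.prob (ran t) {S. h * lam \<le> (-h) * (real (Z k S) - mu)}"
    by (rule measure_Un_le) auto
  also have "\<dots> \<le> exp (- (lam ^ 2) / (18 * real t)) + exp (- (lam ^ 2) / (18 * real t))"
    by (intro add_mono tail) auto
  also have "\<dots> \<le> 2 * exp (- (lam ^ 2) / (72 * real t))"
  proof -
    have "- (lam ^ 2) / (18 * real t) \<le> - (lam ^ 2) / (72 * real t)"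
      using tpos by (simp add: field_simps)
    then show ?thesis by simp
  qed
  finally show ?thesis unfolding mu .
qed

end
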